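(* Let $A$ be a random variable (the parental haplotypes), let $X$ be a random variable (the offspring's haplotypes; $X_j$ denotes the offspring's genotype at SNP $j$, a function of $X$), let $Y$ be a random variable (the response), and let $Z$ be an external confounder, i.e. a random variable such that the conditional distribution of $X$ given $(A, Z=z)$ is the same for all values $z$ and $z'$: $$X \mid (A, Z = z) \stackrel{d}{=} X \mid (A, Z = z') \quad\text{for any } z, z'.$$ Then any valid test of the null hypothesis $H_0: X_j \perp\!\!\!\perp Y \mid A$ is also a valid test of the stronger null hypothesis $H_0': Y \perp\!\!\!\perp X_j \mid (A, Z)$. That is, if a test has probability at most $\alpha$ of rejecting whenever $X_j \perp\!\!\!\perp Y \mid A$ holds, then it also has probability at most $\alpha$ of rejecting whenever $Y \perp\!\!\!\perp X_j \mid (A,Z)$ holds.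
   Context: $B \perp\!\!\!\perp C \mid D$ denotes conditional independence of $B$ and $C$ given $D$. In the paper's setting, $A=(M^a,M^b,F^a,F^b)$ collects the two maternal and two paternal haplotypes (binary vectors over $p$ SNPs), $X=(X^m,X^f)$ are the offspring's maternally and paternally inherited haplotypes, and the genotype at SNP $j$ is $X_j = X^m_j + X^f_j$. *)

theory Defs
  imports "HOL-Probability.Probability"
begin

definition cprob :: "'w measure \<Rightarrow> ('w \<Rightarrow> 'b) \<Rightarrow> 'b set \<Rightarrow> ('w \<Rightarrow> 'd) \<Rightarrow> 'd measure \<Rightarrow> 'w \<Rightarrow> real" where
  "cprob M B S D MD = real_cond_exp M (vimage_algebra (space M) D MD) (\<lambda>w. indicator S (B w))"

definition cond_indep ::
  "'w measure \<Rightarrow> ('w \<Rightarrow> 'b) \<Rightarrow> 'b measure \<Rightarrow> ('w \<Rightarrow> 'c) \<Rightarrow> 'c measure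
     \<Rightarrow> ('w \<Rightarrow> 'd) \<Rightarrow> 'd measure \<Rightarrow> bool" where
  "cond_indep M B MB C MC D MD \<longleftrightarrow>
    (\<forall>S\<in>sets MB. \<forall>T\<in>sets MC. AE w in M.
       real_cond_exp M (vimage_algebra (space M) D MD)
          (\<lambda>w. indicator S (B w) * indicator T (C w)) w
       = cprob M B S D MD w * cprob M C T D MD w)"

text \<open>Haplotypes over the p SNPs (indexed by the finite type 'p) are binary vectors.
  Parental haplotypes A = (M^a, M^b, F^a, F^b); offspring haplotypes X = (X^m, X^f).\<close>
type_synonym 'p hap = "bool ^ 'p"
type_synonym 'p parents = "'p hap \<times> 'p hap \<times> 'p hap \<times> 'p hap"
type_synonym 'p offspring = "'p hap \<times> 'p hap"

definition genotype :: "'p::finite \<Rightarrow> 'p offspring \<Rightarrow> nat" where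
  "genotype j x = of_bool (fst x $ j) + of_bool (snd x $ j)"

definition obs_space :: "'y measure \<Rightarrow> (('p::finite parents \<times> 'p offspring) \<times> 'y) measure" where
  "obs_space MY = count_space UNIV \<Otimes>\<^sub>M MY"

definition H0 :: "'p::finite \<Rightarrow> 'y measure \<Rightarrow> (('p parents \<times> 'p offspring) \<times> 'y) measure \<Rightarrow> bool" where
  "H0 j MY P \<longleftrightarrow>
     cond_indep P (\<lambda>d. genotype j (snd (fst d))) (count_space UNIV) snd MY
                  (\<lambda>d. fst (fst d)) (count_space UNIV)"

definition valid_test_H0 ::
  "'p::finite \<Rightarrow> 'y measure \<Rightarrow> nat \<Rightarrow> (nat \<Rightarrow> ('p parents \<times> 'p offspring) \<times> 'y) set \<Rightarrow> real \<Rightarrow> bool" where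
  "valid_test_H0 j MY n R \<alpha> \<longleftrightarrow>
     R \<in> sets (PiM {..<n} (\<lambda>_. obs_space MY)) \<and>
     (\<forall>P. prob_space P \<and> sets P = sets (obs_space MY) \<and> H0 j MY P \<longrightarrow>
          measure (PiM {..<n} (\<lambda>_. P)) R \<le> \<alpha>)"

end

theory Submission
  imports Defs
begin

lemma sfs:
  assumes "prob_space N" "V \<in> measurable N MV"
  shows "sigma_finite_subalgebra N (vimage_algebra (space N) V MV)"
proof -
  have "subalgebra N (vimage_algebra (space N) V MV)"
    unfolding subalgebra_def using assms(2)
    by (auto simp: sets_vimage_algebra2 measurable_def)
  then have "finite_measure_subalgebra N (vimage_algebra (space N) V MV)"
    using assms(1) unfolding finite_measure_subalgebra_def finite_measure_subalgebra_axioms_def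
    by (simp add: prob_space_def)
  then show ?thesis
    by (rule finite_measure_subalgebra_is_sigma_finite)
qed

lemma const_on_atom:
  fixes f :: "'a \<Rightarrow> real"
  assumes "f \<in> borel_measurable (vimage_algebra (space N) V (count_space UNIV))"
    "w \<in> space N" "w' \<in> space N" "V w = V w'"
  shows "f w = f w'"
proof -
  have "f -` {f w} \<inter> space (vimage_algebra (space N) V (count_space UNIV))
      \<in> sets (vimage_algebra (space N) V (count_space UNIV))"
    by (rule measurable_sets[OF assms(1)]) (rule borel_closed, simp)
  then obtain B where B: "f -` {f w} \<inter> space N = V -` B \<inter> space N"
    by (auto simp: sets_vimage_algebra2)
  have "w \<in> V -` B \<inter> space N" using B assms(2) by auto
  then have "w' \<in> V -` B \<inter> space N" using assms by auto
  then have "w' \<in> f -` {f w} \<inter> space N" using B by simp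
  then show ?thesis by simp
qed

lemma atom_value:
  assumes "prob_space N" "V \<in> measurable N (count_space UNIV)" "integrable N f" "w \<in> space N"
  shows "real_cond_exp N (vimage_algebra (space N) V (count_space UNIV)) f w
           * measure N {x \<in> space N. V x = V w}
         = (\<integral>x. indicator {x \<in> space N. V x = V w} x * f x \<partial>N)"
proof -
  define F where "F = vimage_algebra (space N) V (count_space UNIV)"
  define E where "E = {x \<in> space N. V x = V w}"
  interpret sigma_finite_subalgebra N F unfolding F_def by (rule sfs[OF assms(1,2)])
  interpret p: prob_space N by fact
  have EF: "E \<in> sets F" unfolding F_def E_def
    using in_vimage_algebra[of "{V w}" "count_space UNIV" V "space N"]
    by (simp add: vimage_def Int_def conj_commute)
  have EN: "E \<in> sets N" using EF subalg by (auto simp: subalgebra_def)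
  let ?c = "real_cond_exp N F f w"
  have "(\<integral>x. indicator E x * f x \<partial>N) = (\<integral>x\<in>E. f x \<partial>N)"
    by (simp add: set_lebesgue_integral_def mult.commute)
  also have "\<dots> = (\<integral>x\<in>E. real_cond_exp N F f x \<partial>N)"
    by (rule real_cond_exp_intA[OF assms(3) EF])
  also have "\<dots> = (\<integral>x\<in>E. ?c \<partial>N)"
  proof (rule set_lebesgue_integral_cong[OF EN], intro allI impI)
    fix x assume "x \<in> E"
    then show "real_cond_exp N F f x = ?c" unfolding E_def
      using const_on_atom[of "real_cond_exp N F f" N V x w] borel_measurable_cond_exp[of N F f] assms(4) unfolding F_def by auto
  qed
  also have "\<dots> = measure N E * ?c"
    using set_integral_const[OF EN, of ?c] p.emeasure_finite[of E] by (simp add: top_ennreal_def)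
  finally show ?thesis unfolding F_def E_def by simp
qed

lemma ci_from_atoms:
  fixes V :: "'a \<Rightarrow> 'b::finite" and f g :: "'a \<Rightarrow> real"
  assumes N: "prob_space N" and V: "V \<in> measurable N (count_space UNIV)"
    and intf: "integrable N f" and intg: "integrable N g" and intfg: "integrable N (\<lambda>x. f x * g x)"
    and key: "\<And>a. (\<integral>x. indicator {x \<in> space N. V x = a} x * (f x * g x) \<partial>N)
                     * measure N {x \<in> space N. V x = a}
                   = (\<integral>x. indicator {x \<in> space N. V x = a} x * f x \<partial>N)
                     * (\<integral>x. indicator {x \<in> space N. V x = a} x * g x \<partial>N)"
  shows "AE w in N. real_cond_exp N (vimage_algebra (space N) V (count_space UNIV)) (\<lambda>x. f x * g x) w
     = real_cond_exp N (vimage_algebra (space N) V (count_space UNIV)) f w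
       * real_cond_exp N (vimage_algebra (space N) V (count_space UNIV)) g w"
proof -
  interpret p: prob_space N by fact
  let ?F = "vimage_algebra (space N) V (count_space UNIV)"
  have Ev: "\<And>a. {x \<in> space N. V x = a} \<in> sets N"
  proof -
    fix a
    have "V -` {a} \<inter> space N \<in> sets N" using V by (simp add: measurable_def)
    moreover have "V -` {a} \<inter> space N = {x \<in> space N. V x = a}" by auto
    ultimately show "{x \<in> space N. V x = a} \<in> sets N" by simp
  qed
  have pos: "AE w in N. \<forall>a\<in>UNIV. V w = a \<longrightarrow> measure N {x \<in> space N. V x = a} > 0"
  proof (rule AE_finite_allI, simp)
    fix a
    show "AE w in N. V w = a \<longrightarrow> measure N {x \<in> space N. V x = a} > 0"
    proof (cases "measure N {x \<in> space N. V x = a} > 0")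
      case True then show ?thesis by simp
    next
      case False
      then have "measure N {x \<in> space N. V x = a} = 0" using measure_nonneg[of N "{x \<in> space N. V x = a}"] by linarith
      then have "{x \<in> space N. V x = a} \<in> null_sets N"
        using Ev p.emeasure_eq_measure by (simp add: null_sets_def)
      from AE_not_in[OF this] show ?thesis
        by (rule AE_mp) (auto intro!: AE_I2 simp: AE_space)
    qed
  qed
  show ?thesis
  proof (rule AE_mp[OF pos], rule AE_mp[OF AE_space], rule AE_I2, intro impI)
    fix w assume w: "w \<in> space N" "\<forall>a\<in>UNIV. V w = a \<longrightarrow> measure N {x \<in> space N. V x = a} > 0"
    define p where "p = measure N {x \<in> space N. V x = V w}"
    have pp: "p > 0" using w unfolding p_def by auto
    have 1: "real_cond_exp N ?F (\<lambda>x. f x * g x) w * p = (\<integral>x. indicator {x \<in> space N. V x = V w} x * (f x * g x) \<partial>N)"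
      unfolding p_def using atom_value[OF N V intfg] w by simp
    have 2: "real_cond_exp N ?F f w * p = (\<integral>x. indicator {x \<in> space N. V x = V w} x * f x \<partial>N)"
      unfolding p_def using atom_value[OF N V intf] w by simp
    have 3: "real_cond_exp N ?F g w * p = (\<integral>x. indicator {x \<in> space N. V x = V w} x * g x \<partial>N)"
      unfolding p_def using atom_value[OF N V intg] w by simp
    have "real_cond_exp N ?F (\<lambda>x. f x * g x) w * p * p = (real_cond_exp N ?F f w * p) * (real_cond_exp N ?F g w * p)"
      using 1 2 3 key[of "V w"] unfolding p_def by simp
    then have "real_cond_exp N ?F (\<lambda>x. f x * g x) w * (p * p) = (real_cond_exp N ?F f w * real_cond_exp N ?F g w) * (p * p)"
      by (simp add: algebra_simps)
    then show "real_cond_exp N ?F (\<lambda>x. f x * g x) w = real_cond_exp N ?F f w * real_cond_exp N ?F g w"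
      using pp by simp
  qed
qed

lemma star:
  fixes j :: "'p::finite" and MY :: "'y measure" and MZ :: "'z measure"
    and M :: "'w measure" and A :: "'w \<Rightarrow> 'p parents" and X :: "'w \<Rightarrow> 'p offspring"
    and Y :: "'w \<Rightarrow> 'y" and Z :: "'w \<Rightarrow> 'z"
  assumes M: "prob_space M"
    and A: "A \<in> measurable M (count_space UNIV)"
    and X: "X \<in> measurable M (count_space UNIV)"
    and Y: "Y \<in> measurable M MY"
    and Z: "Z \<in> measurable M MZ"
    and external: "\<forall>S. AE w in M.
          cprob M X S (\<lambda>w. (A w, Z w)) (count_space UNIV \<Otimes>\<^sub>M MZ) w
          = cprob M X S A (count_space UNIV) w"
    and H0': "cond_indep M Y MY (\<lambda>w. genotype j (X w)) (count_space UNIV)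
                (\<lambda>w. (A w, Z w)) (count_space UNIV \<Otimes>\<^sub>M MZ)"
    and T: "T \<in> sets MY"
  shows "(\<integral>w. indicator {w \<in> space M. A w = a} w * (indicator S (genotype j (X w)) * indicator T (Y w)) \<partial>M)
           * measure M {w \<in> space M. A w = a}
         = (\<integral>w. indicator {w \<in> space M. A w = a} w * indicator S (genotype j (X w)) \<partial>M)
           * (\<integral>w. indicator {w \<in> space M. A w = a} w * indicator T (Y w) \<partial>M)"
proof (cases "\<exists>w0\<in>space M. A w0 = a")
  case False
  then have "{w \<in> space M. A w = a} = {}" by auto
  then show ?thesis by simp
next
  case True
  then obtain w0 where w0: "w0 \<in> space M" "A w0 = a" by blast
  interpret M: prob_space M by fact
  let ?FA = "vimage_algebra (space M) A (count_space UNIV)"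
  let ?FZ = "vimage_algebra (space M) (\<lambda>w. (A w, Z w)) (count_space UNIV \<Otimes>\<^sub>M MZ)"
  have AZ: "(\<lambda>w. (A w, Z w)) \<in> measurable M (count_space UNIV \<Otimes>\<^sub>M MZ)"
    using A Z by (rule measurable_Pair)
  interpret FA: sigma_finite_subalgebra M ?FA by (rule sfs[OF M A])
  interpret FZ: sigma_finite_subalgebra M ?FZ by (rule sfs[OF M AZ])
  let ?E = "{w \<in> space M. A w = a}"
  let ?I = "\<lambda>w. indicator ?E w :: real"
  let ?fS = "\<lambda>w. indicator S (genotype j (X w)) :: real"
  let ?fT = "\<lambda>w. indicator T (Y w) :: real"
  have "(\<lambda>x. indicator S (genotype j x) :: real) \<in> borel_measurable (count_space UNIV)" by simp
  from measurable_compose[OF X this] have mS: "?fS \<in> borel_measurable M" .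
  have mT: "?fT \<in> borel_measurable M"
    using measurable_compose[OF Y borel_measurable_indicator[OF T]] .
  have EFZ: "?E \<in> sets ?FZ"
  proof -
    have "(\<lambda>w. (A w, Z w)) -` ({a} \<times> space MZ) \<inter> space M \<in> sets ?FZ"
      by (rule in_vimage_algebra) simp
    moreover have "(\<lambda>w. (A w, Z w)) -` ({a} \<times> space MZ) \<inter> space M = ?E"
      using measurable_space[OF Z] by auto
    ultimately show ?thesis by simp
  qed
  have EM: "?E \<in> sets M" using EFZ FZ.subalg by (auto simp: subalgebra_def)
  have mI: "?I \<in> borel_measurable ?FZ" using EFZ by simp
  have mIM: "?I \<in> borel_measurable M" using EM by simp
  have bnd: "integrable M f" if "f \<in> borel_measurable M" "\<And>w. \<bar>f w\<bar> \<le> 1" for f :: "'w \<Rightarrow> real"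
    using that by (intro M.integrable_const_bound[where B=1]) (auto intro: AE_I2)
  have iS: "integrable M ?fS" by (rule bnd[OF mS]) (simp add: indicator_def)
  have iT: "integrable M ?fT" by (rule bnd[OF mT]) (simp add: indicator_def)
  have iST: "integrable M (\<lambda>w. ?fS w * ?fT w)" by (rule bnd) (use mS mT in simp, simp add: indicator_def)
  have iIST: "integrable M (\<lambda>w. ?I w * (?fS w * ?fT w))" by (rule bnd) (use mS mT mIM in simp, simp add: indicator_def)
  have iIT: "integrable M (\<lambda>w. ?I w * ?fT w)" by (rule bnd) (use mT mIM in simp, simp add: indicator_def)
  define cS where "cS = real_cond_exp M ?FA ?fS w0"
  have c1: "(\<integral>w. ?I w * (?fS w * ?fT w) \<partial>M) = (\<integral>w. ?I w * real_cond_exp M ?FZ (\<lambda>w. ?fS w * ?fT w) w \<partial>M)"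
    by (rule FZ.real_cond_exp_intg(2)[symmetric, OF iIST mI]) (use mS mT in simp)
  have h: "AE w in M. real_cond_exp M ?FZ (\<lambda>w. ?fS w * ?fT w) w
        = real_cond_exp M ?FZ ?fT w * real_cond_exp M ?FZ ?fS w"
  proof -
    have "AE w in M. real_cond_exp M ?FZ (\<lambda>w. ?fT w * ?fS w) w
        = real_cond_exp M ?FZ ?fT w * real_cond_exp M ?FZ ?fS w"
      using H0'[unfolded cond_indep_def cprob_def, rule_format, OF T, of S] by (simp only: sets_count_space Pow_UNIV UNIV_I simp_thms)
    moreover have "(\<lambda>w. ?fT w * ?fS w) = (\<lambda>w. ?fS w * ?fT w)" by (simp add: mult.commute)
    ultimately show ?thesis by simp
  qed
  have e: "AE w in M. real_cond_exp M ?FZ ?fS w = real_cond_exp M ?FA ?fS w"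
    using external[rule_format, of "genotype j -` S"] unfolding cprob_def indicator_vimage .
  have k: "AE w in M. ?I w * real_cond_exp M ?FZ (\<lambda>w. ?fS w * ?fT w) w = cS * (?I w * real_cond_exp M ?FZ ?fT w)"
  proof (rule AE_mp[OF AE_conjI[OF h e]], rule AE_mp[OF AE_space], rule AE_I2, intro impI)
    fix w assume w: "w \<in> space M" and he: "real_cond_exp M ?FZ (\<lambda>w. ?fS w * ?fT w) w
        = real_cond_exp M ?FZ ?fT w * real_cond_exp M ?FZ ?fS w \<and> real_cond_exp M ?FZ ?fS w = real_cond_exp M ?FA ?fS w"
    show "?I w * real_cond_exp M ?FZ (\<lambda>w. ?fS w * ?fT w) w = cS * (?I w * real_cond_exp M ?FZ ?fT w)"
    proof (cases "w \<in> ?E")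
      case True
      then have "real_cond_exp M ?FA ?fS w = cS" unfolding cS_def
        using const_on_atom[of "real_cond_exp M ?FA ?fS" M A w w0] borel_measurable_cond_exp[of M ?FA ?fS] w0 w
        by auto
      then show ?thesis using he True by simp
    qed simp
  qed
  have c2: "(\<integral>w. ?I w * real_cond_exp M ?FZ (\<lambda>w. ?fS w * ?fT w) w \<partial>M) = cS * (\<integral>w. ?I w * ?fT w \<partial>M)"
  proof -
    have "(\<integral>w. ?I w * real_cond_exp M ?FZ (\<lambda>w. ?fS w * ?fT w) w \<partial>M) = (\<integral>w. cS * (?I w * real_cond_exp M ?FZ ?fT w) \<partial>M)"
      by (rule integral_cong_AE) (use k mIM mT in auto)
    also have "\<dots> = cS * (\<integral>w. ?I w * real_cond_exp M ?FZ ?fT w \<partial>M)" by simp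
    also have "(\<integral>w. ?I w * real_cond_exp M ?FZ ?fT w \<partial>M) = (\<integral>w. ?I w * ?fT w \<partial>M)"
      by (rule FZ.real_cond_exp_intg(2)[OF iIT mI mT])
    finally show ?thesis .
  qed
  have c3: "cS * measure M ?E = (\<integral>w. ?I w * ?fS w \<partial>M)"
    using atom_value[OF M A iS w0(1)] w0(2) unfolding cS_def by simp
  have "(\<integral>w. ?I w * (?fS w * ?fT w) \<partial>M) * measure M ?E = cS * measure M ?E * (\<integral>w. ?I w * ?fT w \<partial>M)"
    using c1 c2 by simp
  then show ?thesis using c3 by simp
qed

theorem theorem1:
  fixes j :: "'p::finite" and MY :: "'y measure" and MZ :: "'z measure"
    and n :: nat and R :: "(nat \<Rightarrow> ('p parents \<times> 'p offspring) \<times> 'y) set" and \<alpha> :: real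
    and M :: "'w measure" and A :: "'w \<Rightarrow> 'p parents" and X :: "'w \<Rightarrow> 'p offspring"
    and Y :: "'w \<Rightarrow> 'y" and Z :: "'w \<Rightarrow> 'z"
  assumes valid: "valid_test_H0 j MY n R \<alpha>"
    and M: "prob_space M"
    and A: "A \<in> measurable M (count_space UNIV)"
    and X: "X \<in> measurable M (count_space UNIV)"
    and Y: "Y \<in> measurable M MY"
    and Z: "Z \<in> measurable M MZ"
    and external: "\<forall>S. AE w in M.
          cprob M X S (\<lambda>w. (A w, Z w)) (count_space UNIV \<Otimes>\<^sub>M MZ) w
          = cprob M X S A (count_space UNIV) w"
    and H0': "cond_indep M Y MY (\<lambda>w. genotype j (X w)) (count_space UNIV)
                (\<lambda>w. (A w, Z w)) (count_space UNIV \<Otimes>\<^sub>M MZ)"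
  shows "measure (PiM {..<n} (\<lambda>_. distr M (obs_space MY) (\<lambda>w. ((A w, X w), Y w)))) R \<le> \<alpha>"
proof -
  interpret M: prob_space M by fact
  let ?\<Phi> = "\<lambda>w. ((A w, X w), Y w)"
  let ?O = "obs_space MY :: (('p parents \<times> 'p offspring) \<times> 'y) measure"
  let ?P = "distr M ?O ?\<Phi>"
  have AX: "(\<lambda>w. (A w, X w)) \<in> measurable M (count_space UNIV)"
    unfolding measurable_count_space_eq2_countable
  proof (intro conjI ballI)
    show "(\<lambda>w. (A w, X w)) \<in> space M \<rightarrow> UNIV" by simp
    fix ax :: "'p parents \<times> 'p offspring"
    obtain a x where ax: "ax = (a, x)" by (cases ax)
    have "(\<lambda>w. (A w, X w)) -` {ax} \<inter> space M = (A -` {a} \<inter> space M) \<inter> (X -` {x} \<inter> space M)"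
      using ax by auto
    moreover have "A -` {a} \<inter> space M \<in> sets M" using A by (simp add: measurable_def)
    moreover have "X -` {x} \<inter> space M \<in> sets M" using X by (simp add: measurable_def)
    ultimately show "(\<lambda>w. (A w, X w)) -` {ax} \<inter> space M \<in> sets M" by simp
  qed
  have Phi: "?\<Phi> \<in> measurable M ?O"
    unfolding obs_space_def by (rule measurable_Pair[OF AX Y])
  have PP: "prob_space ?P" by (rule M.prob_space_distr[OF Phi])
  have sP: "sets ?P = sets ?O" by simp
  have spP: "space ?P = space ?O" by simp
  let ?V = "\<lambda>d::('p parents \<times> 'p offspring) \<times> 'y. fst (fst d)"
  have VO: "?V \<in> measurable ?O (count_space UNIV)"
    unfolding obs_space_def by (rule measurable_compose[OF measurable_fst]) simp
  have VP: "?V \<in> measurable ?P (count_space UNIV)"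
    using VO by (simp add: measurable_cong_sets[OF sP refl])
  have Ealpha: "{x \<in> space ?O. ?V x = a} \<in> sets ?O" for a
  proof -
    have "?V -` {a} \<inter> space ?O \<in> sets ?O" using VO by (simp add: measurable_def)
    moreover have "?V -` {a} \<inter> space ?O = {x \<in> space ?O. ?V x = a}" by auto
    ultimately show ?thesis by simp
  qed
  have tr: "(\<integral>x. indicator {x \<in> space ?P. ?V x = a} x * h x \<partial>?P)
          = (\<integral>w. indicator {w \<in> space M. A w = a} w * h (?\<Phi> w) \<partial>M)"
    if hm: "h \<in> borel_measurable ?O" for h :: "_ \<Rightarrow> real" and a
  proof -
    have "(\<lambda>x. indicator {x \<in> space ?O. ?V x = a} x * h x) \<in> borel_measurable ?O"
      using hm Ealpha[of a] by simp
    from integral_distr[OF Phi this]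
    have "(\<integral>x. indicator {x \<in> space ?P. ?V x = a} x * h x \<partial>?P)
        = (\<integral>w. indicator {x \<in> space ?O. ?V x = a} (?\<Phi> w) * h (?\<Phi> w) \<partial>M)" by simp
    also have "\<dots> = (\<integral>w. indicator {w \<in> space M. A w = a} w * h (?\<Phi> w) \<partial>M)"
    proof (rule Bochner_Integration.integral_cong[OF refl])
      fix w assume w: "w \<in> space M"
      then have "?\<Phi> w \<in> space ?O" using measurable_space[OF Phi] by blast
      then show "indicator {x \<in> space ?O. ?V x = a} (?\<Phi> w) * h (?\<Phi> w)
               = indicator {w \<in> space M. A w = a} w * h (?\<Phi> w)"
        using w by (simp add: indicator_def)
    qed
    finally show ?thesis .
  qed
  have mP: "measure ?P {x \<in> space ?P. ?V x = a} = measure M {w \<in> space M. A w = a}" for a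
  proof -
    have "measure ?P {x \<in> space ?P. ?V x = a} = measure M (?\<Phi> -` {x \<in> space ?O. ?V x = a} \<inter> space M)"
      using measure_distr[OF Phi Ealpha[of a]] by simp
    also have "?\<Phi> -` {x \<in> space ?O. ?V x = a} \<inter> space M = {w \<in> space M. A w = a}"
      using measurable_space[OF Phi] by auto
    finally show ?thesis .
  qed
  have H0P: "H0 j MY ?P"
    unfolding H0_def cond_indep_def cprob_def
  proof (intro ballI)
    fix S :: "nat set" and T assume T: "T \<in> sets MY"
    interpret P: prob_space ?P by (rule PP)
    let ?f = "\<lambda>d::('p parents \<times> 'p offspring) \<times> 'y. indicator S (genotype j (snd (fst d))) :: real"
    let ?g = "\<lambda>d::('p parents \<times> 'p offspring) \<times> 'y. indicator T (snd d) :: real"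
    have fO: "?f \<in> borel_measurable ?O"
    proof -
      have "(\<lambda>d::('p parents \<times> 'p offspring). indicator S (genotype j (snd d)) :: real) \<in> borel_measurable (count_space UNIV)" by simp
      then show ?thesis unfolding obs_space_def by (rule measurable_compose[OF measurable_fst])
    qed
    have gO: "?g \<in> borel_measurable ?O"
      unfolding obs_space_def by (rule measurable_compose[OF measurable_snd borel_measurable_indicator[OF T]])
    have fgO: "(\<lambda>d. ?f d * ?g d) \<in> borel_measurable ?O" using fO gO by simp
    have bnd: "integrable ?P h" if "h \<in> borel_measurable ?O" "\<And>w. \<bar>h w\<bar> \<le> 1" for h :: "_ \<Rightarrow> real"
      using that by (intro P.integrable_const_bound[where B=1]) (auto intro: AE_I2 simp: measurable_cong_sets[OF sP refl])
    have intf: "integrable ?P ?f" by (rule bnd[OF fO]) (simp add: indicator_def)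
    have intg: "integrable ?P ?g" by (rule bnd[OF gO]) (simp add: indicator_def)
    have intfg: "integrable ?P (\<lambda>d. ?f d * ?g d)" by (rule bnd[OF fgO]) (simp add: indicator_def)
    show "AE w in ?P. real_cond_exp ?P (vimage_algebra (space ?P) ?V (count_space UNIV))
              (\<lambda>w. ?f w * ?g w) w =
             real_cond_exp ?P (vimage_algebra (space ?P) ?V (count_space UNIV)) ?f w *
             real_cond_exp ?P (vimage_algebra (space ?P) ?V (count_space UNIV)) ?g w"
    proof (rule ci_from_atoms[OF PP VP intf intg intfg])
      fix a
      show "(\<integral>x. indicator {x \<in> space ?P. ?V x = a} x * (?f x * ?g x) \<partial>?P) * measure ?P {x \<in> space ?P. ?V x = a}
          = (\<integral>x. indicator {x \<in> space ?P. ?V x = a} x * ?f x \<partial>?P) * (\<integral>x. indicator {x \<in> space ?P. ?V x = a} x * ?g x \<partial>?P)"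
        unfolding tr[OF fO] tr[OF gO] tr[OF fgO] mP
        using star[OF M A X Y Z external H0' T, of a S] by simp
    qed
  qed
  have "measure (PiM {..<n} (\<lambda>_. ?P)) R \<le> \<alpha>"
    using valid PP H0P unfolding valid_test_H0_def by simp
  then show ?thesis .
qed

end
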